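(* Let $n$ be a positive integer with $\lambda^{3n/2}>2(1+\sqrt2)C_1$. Then $c_n>0$ and $$\big|\lambda^{n/2}-\sqrt{3\theta^2-p}\cdot c_n^{1/2}\big|<\frac{\sqrt2 C_1}{\lambda^n}.$$
   Context: Standing setup: $p,q\in\mathbb{Z}$ are such that $x^3-px-q$ is irreducible over $\mathbb{Q}$ with exactly one real root $\theta$ (one has $3\theta^2-4p>0$ and $3\theta^2-p>0$). $K=\mathbb{Q}(\theta)\subset\mathbb{R}$, $\mathcal{O}_K$ its ring of integers. $d$ is a positive integer with $\mathcal{O}_K\subseteq\frac1d\mathbb{Z}[\theta]$. $\lambda\in\mathcal{O}_K$ is a unit with $\lambda>1$. For $n\ge1$ the rationals $a_n,b_n,c_n$ are defined by $a_n+b_n\theta+c_n\theta^2=\lambda^n$, and $X_n=a_n+pc_n-b_n\theta$, $Y_n=a_n+pc_n-c_n\theta^2$, $Z_n=b_n\theta-c_n\theta^2$, $k_n=dc_n$. Constants: $C_1=\max\{\sqrt2,\ \frac{\sqrt2|\theta|}{\sqrt{3\theta^2-4p}}\}$, $C_2=\frac{\sqrt d}{\sqrt{3\theta^2-p}}$. *)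

theory Defs
  imports "HOL-Analysis.Analysis" "HOL-Computational_Algebra.Computational_Algebra"
begin

(* K = Q(theta): since theta has degree 3, K = {a + b theta + c theta^2 | a b c rational} *)
definition in_field_K :: "real \<Rightarrow> real \<Rightarrow> bool" where
  "in_field_K \<theta> x \<longleftrightarrow> (\<exists>a b c :: rat. x = of_rat a + of_rat b * \<theta> + of_rat c * \<theta>^2)"

definition in_OK :: "real \<Rightarrow> real \<Rightarrow> bool" where
  "in_OK \<theta> x \<longleftrightarrow> in_field_K \<theta> x \<and> algebraic_int x"

definition unit_OK :: "real \<Rightarrow> real \<Rightarrow> bool" where
  "unit_OK \<theta> x \<longleftrightarrow> in_OK \<theta> x \<and> x \<noteq> 0 \<and> in_OK \<theta> (inverse x)"

end

theory Submission
  imports Defs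
begin


locale cub =
  fixes p q :: int and \<theta> :: real
  assumes irred: "irreducible ([:of_int (-q), of_int (-p), 0, 1:] :: rat poly)"
    and root: "\<theta>^3 - of_int p * \<theta> - of_int q = 0"
    and uniq: "\<forall>x::real. x^3 - of_int p * x - of_int q = 0 \<longrightarrow> x = \<theta>"
begin

lemma no_rat_root: "(r::rat)^3 - of_int p * r - of_int q \<noteq> 0"
proof
  assume h: "r^3 - of_int p * r - of_int q = 0"
  have qr: "(of_int q::rat) = r^3 - of_int p * r" using h by simp
  have eq: "([:of_int (-q), of_int (-p), 0, 1:] :: rat poly) = [:-r,1:] * [:r^2 - of_int p, r, 1:]"
    by (simp add: qr algebra_simps power2_eq_square power3_eq_cube)
  from irreducibleD[OF irred eq] show False
    by (auto simp: is_unit_iff_degree)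
qed

lemma theta_not_rat: "\<theta> \<noteq> of_rat r"
proof
  assume "\<theta> = of_rat r"
  with root have "of_rat (r^3 - of_int p * r - of_int q) = (0::real)"
    by (simp add: of_rat_diff of_rat_mult of_rat_power)
  then have "r^3 - of_int p * r - of_int q = 0" by simp
  with no_rat_root show False by simp
qed

lemma indep:
  assumes h: "of_rat a + of_rat b * \<theta> + of_rat c * \<theta>^2 = 0"
  shows "a = 0 \<and> b = 0 \<and> c = 0"
proof (cases "c = 0")
  case False
  define K where "K = a*c - b^2 + c^2 * of_int p"
  define M where "M = a*b - c^2 * of_int q"
  have "\<theta> * of_rat K - of_rat M
     = (of_rat c*\<theta> - of_rat b)*(of_rat a + of_rat b * \<theta> + of_rat c * \<theta>^2)
       - (of_rat c)^2*(\<theta>^3 - of_int p * \<theta> - of_int q)"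
    unfolding K_def M_def by (simp add: of_rat_add of_rat_diff of_rat_mult of_rat_power algebra_simps power2_eq_square power3_eq_cube)
  also have "\<dots> = 0" using h root by simp
  finally have e: "\<theta> * of_rat K = of_rat M" by simp
  show ?thesis
  proof (cases "K = 0")
    case False
    then have "\<theta> = of_rat (M / K)" using e by (simp add: of_rat_divide field_simps)
    with theta_not_rat show ?thesis by blast
  next
    case True
    then have M0: "M = 0" using e by simp
    have "(b/c)^3 - of_int p * (b/c) - of_int q = (b*(b^2 - c^2 * of_int p) - c*(c^2 * of_int q)) / c^3"
      using False by (simp add: field_simps power2_eq_square power3_eq_cube)
    also have "b*(b^2 - c^2 * of_int p) - c*(c^2 * of_int q) = 0"
      using True M0 unfolding K_def M_def by algebra
    also have "0 / c^3 = 0" by simp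
    finally show ?thesis using no_rat_root by blast
  qed
next
  case True
  show ?thesis
  proof (cases "b = 0")
    case False
    with h True have "\<theta> = of_rat (-a/b)" by (simp add: of_rat_divide of_rat_minus field_simps)
    with theta_not_rat show ?thesis by blast
  next
    case b: True
    with h True show ?thesis by simp
  qed
qed

lemma D_pos: "3*\<theta>^2 - 4* of_int p > 0"
proof (rule ccontr)
  assume nD: "\<not> 3*\<theta>^2 - 4 * of_int p > 0"
  define w where "w = sqrt (-(3*\<theta>^2 - 4* of_int p))"
  have w2: "w^2 = -(3*\<theta>^2 - 4* of_int p)" unfolding w_def using nD by simp
  have r1: "((-\<theta>+w)/2)^3 - of_int p*((-\<theta>+w)/2) - of_int q = 0"
  proof -
    have "((-\<theta>+w)/2)^3 - of_int p*((-\<theta>+w)/2) - of_int q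
       = ((-\<theta>+w)/2)^3 - of_int p*((-\<theta>+w)/2) - (\<theta>^3 - of_int p * \<theta>)" using root by simp
    also have "\<dots> = (w^2 + 3*\<theta>^2 - 4 * of_int p)*(w-3*\<theta>)/8"
      by (simp add: field_simps power2_eq_square power3_eq_cube)
    also have "\<dots> = 0" using w2 by simp
    finally show ?thesis .
  qed
  have r2: "((-\<theta>-w)/2)^3 - of_int p*((-\<theta>-w)/2) - of_int q = 0"
  proof -
    have "((-\<theta>-w)/2)^3 - of_int p*((-\<theta>-w)/2) - of_int q
       = ((-\<theta>-w)/2)^3 - of_int p*((-\<theta>-w)/2) - (\<theta>^3 - of_int p * \<theta>)" using root by simp
    also have "\<dots> = (w^2 + 3*\<theta>^2 - 4 * of_int p)*(-w-3*\<theta>)/8"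
      by (simp add: field_simps power2_eq_square power3_eq_cube)
    also have "\<dots> = 0" using w2 by simp
    finally show ?thesis .
  qed
  from uniq r1 r2 have "(-\<theta>+w)/2 = \<theta>" "(-\<theta>-w)/2 = \<theta>" by blast+
  then have "\<theta> = 0" by simp
  then have "\<theta> = of_rat 0" by simp
  with theta_not_rat show False by blast
qed

end


definition Nq :: "'a::comm_ring_1 \<Rightarrow> 'a \<Rightarrow> 'a \<Rightarrow> 'a \<Rightarrow> 'a \<Rightarrow> 'a" where
  "Nq p q a b c = a*(a+c*p)^2 - a*b*(b*p+c*q) - c*q*b*(a+c*p) + c^2*q*(b*p+c*q) + b^3*q - b*c*q*(a+c*p)"

definition tm :: "'a::comm_ring_1 \<Rightarrow> 'a \<Rightarrow> 'a\<times>'a\<times>'a \<Rightarrow> 'a\<times>'a\<times>'a \<Rightarrow> 'a\<times>'a\<times>'a" where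
  "tm p q s t = (case s of (a,b,c) \<Rightarrow> case t of (a',b',c') \<Rightarrow>
     (a*a' + q*(b*c'+c*b'), a*b'+b*a' + p*(b*c'+c*b') + q*c*c', a*c'+b*b'+c*a' + p*c*c'))"

lemma Nq_mult: "Nq p q (fst (tm p q (a,b,c) (a',b',c'))) (fst (snd (tm p q (a,b,c) (a',b',c')))) (snd (snd (tm p q (a,b,c) (a',b',c'))))
   = Nq p q a b c * Nq p q a' b' c'"
  by (simp add: Nq_def tm_def algebra_simps power2_eq_square power3_eq_cube)

lemma Nq_hom: "Nq (of_int p) (of_int q) (of_int a) (of_int b) (of_int c) = (of_int (Nq p q a b c) :: 'a::comm_ring_1)"
  by (simp add: Nq_def)

lemma Nq_scale: "d \<noteq> 0 \<Longrightarrow> Nq p q (a/d) (b/d) (c/d) = Nq p q a b c / d^3" for p q a b c d :: "'a::field"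
  by (simp add: Nq_def field_simps power2_eq_square power3_eq_cube)

context cub begin

definition ev :: "rat\<times>rat\<times>rat \<Rightarrow> real" where
  "ev t = of_rat (fst t) + of_rat (fst (snd t)) * \<theta> + of_rat (snd (snd t)) * \<theta>^2"

definition tmr where "tmr = tm (of_int p :: rat) (of_int q)"
definition Nr :: "rat\<times>rat\<times>rat \<Rightarrow> rat" where
  "Nr t = Nq (of_int p) (of_int q) (fst t) (fst (snd t)) (snd (snd t))"
definition tp where "tp t k = (tmr t ^^ k) (1,0,0)"

lemma q_eq: "real_of_int q = \<theta>^3 - of_int p * \<theta>" using root by simp

lemma ev_tm: "ev (tmr s t) = ev s * ev t"
proof -
  obtain a b c where s: "s = (a,b,c)" by (cases s) auto
  obtain a' b' c' where t: "t = (a',b',c')" by (cases t) auto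
  show ?thesis
    unfolding s t ev_def tmr_def tm_def
    by (simp add: of_rat_add of_rat_mult q_eq) algebra
qed

lemma ev_inj: "ev s = ev t \<Longrightarrow> s = t"
proof -
  assume h: "ev s = ev t"
  obtain a b c where s: "s = (a,b,c)" by (cases s) auto
  obtain a' b' c' where t: "t = (a',b',c')" by (cases t) auto
  have "of_rat (a-a') + of_rat (b-b') * \<theta> + of_rat (c-c') * \<theta>^2 = 0"
    using h unfolding s t ev_def by (simp add: of_rat_diff algebra_simps)
  from indep[OF this] show ?thesis using s t by simp
qed

lemma tp_0: "tp t 0 = (1,0,0)" by (simp add: tp_def)
lemma tp_Suc: "tp t (Suc k) = tmr t (tp t k)" by (simp add: tp_def)
lemma ev1: "ev (1,0,0) = 1" by (simp add: ev_def)
lemma Nr1: "Nr (1,0,0) = 1" by (simp add: Nr_def Nq_def)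

lemma ev_tp: "ev (tp t k) = ev t ^ k"
  by (induct k) (simp_all add: tp_0 tp_Suc ev1 ev_tm)

lemma Nr_tm: "Nr (tmr s t) = Nr s * Nr t"
proof -
  obtain a b c where s: "s = (a,b,c)" by (cases s) auto
  obtain a' b' c' where t: "t = (a',b',c')" by (cases t) auto
  show ?thesis unfolding s t Nr_def tmr_def using Nq_mult by simp
qed

lemma Nr_tp: "Nr (tp t k) = Nr t ^ k"
  by (induct k) (simp_all add: tp_0 tp_Suc Nr1 Nr_tm)

lemma norm_real:
  "ev (a,b,c) * ((of_rat a - of_rat b*\<theta>/2 + of_rat c*(of_int p-\<theta>^2/2))^2
      + (3*\<theta>^2-4 * of_int p)/4*(of_rat b - of_rat c*\<theta>)^2) = of_rat (Nr (a,b,c))"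
  unfolding ev_def Nr_def Nq_def
  by (simp add: of_rat_add of_rat_mult of_rat_diff of_rat_power q_eq) algebra

end


lemma rat_int:
  fixes r :: rat and E :: int
  assumes E: "E > 0" and h: "\<forall>k. of_int E * r^k \<in> \<int>"
  shows "r \<in> \<int>"
proof -
  obtain a b where qo: "quotient_of r = (a,b)" by (cases "quotient_of r") auto
  have r: "r = of_int a / of_int b" using quotient_of_div[OF qo] .
  have b: "b > 0" using quotient_of_denom_pos[OF qo] .
  have cop: "coprime a b" using quotient_of_coprime[OF qo] .
  define k where "k = nat E"
  from h obtain z where z: "of_int E * r^k = of_int z" by (meson Ints_cases)
  then have "of_int E * of_int a ^ k = (of_int z * of_int b ^ k :: rat)"
    using b unfolding r by (simp add: field_simps power_divide)
  then have "E * a^k = z * b^k" by (metis of_int_eq_iff of_int_mult of_int_power)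
  then have "b^k dvd E * a^k" by (metis dvd_triv_right)
  moreover have "coprime (b^k) (a^k)" using cop by (simp add: coprime_commute)
  ultimately have "b^k dvd E" using coprime_dvd_mult_left_iff by blast
  then have le: "b^k \<le> E" using E by (simp add: zdvd_imp_le)
  have "b = 1"
  proof (rule ccontr)
    assume "b \<noteq> 1"
    with b have "b \<ge> 2" by simp
    then have "(2::int)^k \<le> b^k" by (simp add: power_mono)
    moreover have "int k < 2^k" by (metis of_nat_less_iff of_nat_numeral of_nat_power less_exp)
    ultimately show False using le E unfolding k_def by simp
  qed
  then show ?thesis unfolding r by simp
qed

context cub begin

definition Good :: "int \<Rightarrow> real \<Rightarrow> bool" where
  "Good E y \<longleftrightarrow> (\<exists>u v w :: int. y = (of_int u + of_int v * \<theta> + of_int w * \<theta>^2) / of_int E)"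

lemma Good_ev: "\<exists>E>0. Good E (ev s)"
proof -
  obtain a b c where s: "s = (a,b,c)" by (cases s) auto
  obtain na da where qa: "quotient_of a = (na,da)" by (cases "quotient_of a") auto
  obtain nb db where qb: "quotient_of b = (nb,db)" by (cases "quotient_of b") auto
  obtain nc dc where qc: "quotient_of c = (nc,dc)" by (cases "quotient_of c") auto
  have pos: "da > 0" "db > 0" "dc > 0" using qa qb qc quotient_of_denom_pos by blast+
  have eq: "ev s = (of_int (na*db*dc) + of_int (nb*da*dc) * \<theta> + of_int (nc*da*db) * \<theta>^2) / of_int (da*db*dc)"
    unfolding s ev_def using pos
    by (simp add: quotient_of_div[OF qa] quotient_of_div[OF qb] quotient_of_div[OF qc] of_rat_divide field_simps)
  have "Good (da*db*dc) (ev s)" unfolding Good_def using eq by blast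
  then show ?thesis using pos by (intro exI[of _ "da*db*dc"]) auto
qed

lemma Good_mono: assumes "Good E y" "E dvd F" "E \<noteq> 0" "F \<noteq> 0" shows "Good F y"
proof -
  obtain u v w where y: "y = (of_int u + of_int v * \<theta> + of_int w * \<theta>^2) / of_int E"
    using assms(1) unfolding Good_def by blast
  obtain k where F: "F = E * k" using assms(2) by blast
  have "k \<noteq> 0" using F assms by auto
  have "(of_int (u * k) + of_int (v * k) * \<theta> + of_int (w * k) * \<theta>^2) / of_int F
     = (of_int k * (of_int u + of_int v * \<theta> + of_int w * \<theta>^2)) / (of_int k * of_int E)"
    unfolding F by (simp add: algebra_simps)
  also have "\<dots> = y" unfolding y using \<open>k \<noteq> 0\<close> by simp
  finally have "y = (of_int (u * k) + of_int (v * k) * \<theta> + of_int (w * k) * \<theta>^2) / of_int F" by simp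
  then show ?thesis unfolding Good_def by blast
qed

lemma Good_add: assumes "Good E y" "Good E z" shows "Good E (y+z)"
proof -
  obtain u v w where y: "y = (of_int u + of_int v * \<theta> + of_int w * \<theta>^2) / of_int E"
    using assms(1) unfolding Good_def by blast
  obtain u' v' w' where z: "z = (of_int u' + of_int v' * \<theta> + of_int w' * \<theta>^2) / of_int E"
    using assms(2) unfolding Good_def by blast
  have "y + z = (of_int (u+u') + of_int (v+v') * \<theta> + of_int (w+w') * \<theta>^2) / of_int E"
    unfolding y z by (simp add: add_divide_distrib[symmetric] algebra_simps)
  then show ?thesis unfolding Good_def by blast
qed

lemma Good_smult: assumes "Good E y" shows "Good E (of_int c * y)"
proof -
  obtain u v w where y: "y = (of_int u + of_int v * \<theta> + of_int w * \<theta>^2) / of_int E"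
    using assms(1) unfolding Good_def by blast
  have "of_int c * y = (of_int (c * u) + of_int (c * v) * \<theta> + of_int (c * w) * \<theta>^2) / of_int E"
    unfolding y by (simp add: algebra_simps)
  then show ?thesis unfolding Good_def by blast
qed

lemma Good_0: "Good E 0"
  unfolding Good_def by (rule exI[of _ 0], rule exI[of _ 0], rule exI[of _ 0]) simp

lemma Good_sum: "(\<forall>i<(n::nat). Good E (f i)) \<Longrightarrow> Good E (\<Sum>i<n. f i)"
  by (induct n) (simp_all add: Good_0 Good_add)

lemma Good_neg: "Good E y \<Longrightarrow> Good E (-y)"
  using Good_smult[of E y "-1"] by simp

lemma int_norm:
  assumes ok: "in_OK \<theta> x" and xt: "x = ev t"
  shows "Nr t \<in> \<int>"
proof -
  from ok have "algebraic_int x" unfolding in_OK_def by blast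
  then obtain P :: "int poly" where P: "poly (map_poly of_int P) x = 0" "lead_coeff P = 1"
    unfolding algebraic_int_altdef_ipoly by blast
  define m where "m = degree P"
  have deg: "degree (map_poly (of_int :: int \<Rightarrow> real) P) = m"
    unfolding m_def by (rule degree_map_poly) simp
  have cf: "coeff (map_poly (of_int :: int \<Rightarrow> real) P) i = of_int (coeff P i)" for i
    by (rule coeff_map_poly) simp
  have "0 = (\<Sum>i\<le>m. of_int (coeff P i) * x^i)"
    using P(1) by (simp add: poly_altdef deg cf)
  also have "\<dots> = (\<Sum>i<m. of_int (coeff P i) * x^i) + x^m"
    using P(2) unfolding m_def by (simp flip: lessThan_Suc_atMost)
  finally have xm: "x^m = - (\<Sum>i<m. of_int (coeff P i) * x^i)" by linarith
  have "\<forall>j. \<exists>E>0. Good E (x^j)" using Good_ev[of "tp t _"] ev_tp xt by metis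
  then obtain f where f: "\<And>j. f j > 0 \<and> Good (f j) (x^j)" by metis
  define E where "E = (\<Prod>j<m. f j)"
  have Epos: "E > 0" unfolding E_def using f by (simp add: prod_pos)
  have allG: "Good E (x^k)" for k
  proof (induct k rule: nat_less_induct)
    fix k assume less: "\<forall>j<k. Good E (x^j)"
    show "Good E (x^k)"
    proof (cases "k < m")
      case True
      have dv: "f k dvd E" unfolding E_def using True by (intro dvd_prodI) auto
      have fk: "0 < f k" "Good (f k) (x^k)" using f[of k] by auto
      show ?thesis by (rule Good_mono[OF fk(2) dv]) (use fk Epos in auto)
    next
      case False
      have "x^k = x^(k-m) * x^m" using False by (simp flip: power_add)
      also have "\<dots> = - (\<Sum>i<m. of_int (coeff P i) * x^(k-m+i))"
        unfolding xm by (simp add: sum_distrib_left power_add algebra_simps)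
      finally have e: "x^k = - (\<Sum>i<m. of_int (coeff P i) * x^(k-m+i))" .
      have "\<forall>i<m. Good E (of_int (coeff P i) * x^(k-m+i))"
        using less False by (intro allI impI Good_smult) auto
      then show ?thesis unfolding e by (intro Good_neg Good_sum)
    qed
  qed
  have allk: "\<forall>k. of_int (E^3) * Nr t ^ k \<in> \<int>"
  proof
    fix k
    obtain u v w where uvw: "x^k = (of_int u + of_int v * \<theta> + of_int w * \<theta>^2) / of_int E"
      using allG[of k] unfolding Good_def by blast
    define s where "s = (of_int u / of_int E :: rat, of_int v / of_int E :: rat, of_int w / of_int E :: rat)"
    have es: "ev s = (of_int u + of_int v * \<theta> + of_int w * \<theta>^2) / of_int E"
      unfolding s_def ev_def by (simp add: of_rat_divide add_divide_distrib)
    have "ev (tp t k) = ev s" unfolding ev_tp xt[symmetric] uvw es ..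
    then have "tp t k = s" by (rule ev_inj)
    then have "Nr t ^ k = Nr s" by (metis Nr_tp)
    also have "\<dots> = of_int (Nq p q u v w) / of_int E ^ 3"
      unfolding s_def Nr_def using Epos by (simp add: Nq_scale Nq_hom)
    finally show "of_int (E^3) * Nr t ^ k \<in> \<int>" using Epos by simp
  qed
  show ?thesis by (rule rat_int[OF _ allk]) (use Epos in simp)
qed

end


lemma final_ineq:
  fixes L s th P A B C :: real
  assumes Dpos: "3 * th^2 - 4 * P > 0" and spos: "s > 0" and Ls: "L = s^2"
    and Q: "L * ((A - B * th/2 + C * (P - th^2/2))^2 + (3 * th^2-4 * P)/4 * (B - C * th)^2) = 1"
    and Lrep: "L = A + B * th + C * th^2"
    and big: "s^3 > 2 * (1+sqrt 2) * max (sqrt 2) (sqrt 2 * \<bar>th\<bar>/sqrt(3 * th^2-4 * P))"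
  shows "C > 0 \<and> \<bar>s - sqrt(3 * th^2 - P) * sqrt C\<bar> < sqrt 2 * max (sqrt 2) (sqrt 2 * \<bar>th\<bar>/sqrt(3 * th^2-4 * P)) / L"
proof -
  define D where "D = 3 * th^2-4 * P"
  define C1 where "C1 = max (sqrt 2) (sqrt 2 * \<bar>th\<bar>/sqrt D)"
  define R where "R = A - B * th/2 + C * (P - th^2/2)"
  define Y where "Y = (B - C * th)/2"
  define E where "E = C * (3 * th^2-P) - L"
  have D: "D > 0" using Dpos D_def by simp
  have Lpos: "L > 0" using Ls spos by simp
  have DY: "D * Y^2 = (3 * th^2-4 * P)/4 * (B - C * th)^2" unfolding D_def Y_def by (simp add: power_divide)
  have QQ: "L * (R^2 + D * Y^2) = 1" unfolding R_def DY by (rule Q)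
  have EE: "E = - R - 3 * th * Y" unfolding E_def R_def Y_def Lrep by (simp add: field_simps power2_eq_square)
  have CS: "D * E^2 \<le> (D + 9 * th^2) * (R^2 + D * Y^2)"
  proof -
    have "(D + 9 * th^2) * (R^2 + D * Y^2) - D * E^2 = (3 * th * R - D * Y)^2"
      unfolding EE by (simp add: power2_eq_square algebra_simps)
    then show ?thesis by (metis diff_ge_0_iff_ge zero_le_power2)
  qed
  have RD: "R^2 + D * Y^2 = 1/L" using QQ Lpos by (simp add: field_simps)
  have s2: "sqrt 2 \<ge> 1.4" by (rule real_le_rsqrt) (simp add: power2_eq_square)
  have C1a: "C1 \<ge> sqrt 2" unfolding C1_def by simp
  have C1pos: "C1 > 0" using C1a s2 by simp
  have C1sq: "C1^2 \<ge> 2" using C1a by (metis real_sqrt_pow2 zero_le_numeral power_mono real_sqrt_ge_zero)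
  have C1b: "C1 \<ge> sqrt 2 * \<bar>th\<bar>/sqrt D" unfolding C1_def by simp
  have "(sqrt 2 * \<bar>th\<bar>/sqrt D)^2 = 2 * th^2/D" using D by (simp add: power_divide power_mult_distrib)
  then have C1th: "C1^2 \<ge> 2 * th^2/D"
    by (metis C1b power_mono divide_nonneg_pos abs_ge_zero mult_nonneg_nonneg real_sqrt_ge_zero zero_le_numeral D real_sqrt_gt_zero)
  have "D * C1^2 \<ge> 2 * th^2" using C1th D by (simp add: field_simps)
  moreover have "D * C1^2 \<ge> D * 2" using C1sq D by (simp add: mult_left_mono)
  ultimately have A1: "D + 9 * th^2 \<le> 5 * (D * C1^2)" by linarith
  have "D * E^2 \<le> (D + 9 * th^2) * (1/L)" using CS RD by simp
  also have "\<dots> \<le> 5 * (D * C1^2) * (1/L)" using A1 Lpos by (simp add: divide_right_mono)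
  finally have "D * E^2 \<le> D * (5 * C1^2/L)" by (simp add: ac_simps)
  then have Eb: "E^2 \<le> 5 * C1^2/L" using D by (metis mult_le_cancel_left_pos)
  then have EbL: "E^2 * s^2 \<le> 5 * C1^2" using Lpos Ls by (simp add: field_simps)
  have "2 * (1+sqrt 2) \<ge> 4.8" using s2 by simp
  then have "2 * (1+sqrt 2) * C1 \<ge> 4.8 * C1" using C1pos by (simp add: mult_right_mono)
  then have "s^3 > 4.8 * C1" using big unfolding C1_def D_def by linarith
  then have "(4.8 * C1)^2 < (s^3)^2" using C1pos by (intro power_strict_mono) auto
  then have s6: "576 * C1^2 < 25 * s^6" by (simp add: power_mult_distrib power_divide flip: power_mult)
  have s64: "s^6 = s^4 * s^2" by (simp flip: power_add)
  have "E^2 * s^2 < s^6/4" using EbL s6 zero_le_power2[of C1] by linarith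
  then have "E^2 * s^2 < (s^4/4) * s^2" unfolding s64 by simp
  then have "E^2 < s^4/4" using spos by (metis mult_less_cancel_right_pos zero_less_power)
  then have E4: "E^2 < (s^2/2)^2" by (simp add: power_divide flip: power_mult)
  have Eabs: "\<bar>E\<bar> < s^2/2" using power_less_imp_less_base[of "\<bar>E\<bar>" 2 "s^2/2"] E4 by simp
  define f where "f = 3 * th^2 - P"
  have fpos: "f > 0" unfolding f_def using D D_def by (simp add: power2_eq_square) (smt (verit) zero_le_square)
  have Cf: "C * f = L + E" unfolding E_def f_def by simp
  have Cf2: "C * f > s^2/2" using Cf Eabs Ls by linarith
  have "s^2/2 > 0" using spos by simp
  then have "C * f > 0" using Cf2 by linarith
  then have Cpos: "C > 0" using fpos by (simp add: zero_less_mult_iff)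
  define X where "X = sqrt f * sqrt C"
  have X0: "X \<ge> 0" unfolding X_def using fpos Cpos by simp
  have X2: "X^2 = L + E" unfolding X_def using fpos Cpos Cf by (simp add: power_mult_distrib mult.commute)
  have "X^2 > s^2/2" using X2 Cf Cf2 by linarith
  moreover have "(0.7 * s)^2 = (49/100) * s^2" by (simp add: power2_eq_square)
  moreover have "s^2 \<ge> 0" by simp
  ultimately have "(0.7 * s)^2 < X^2" by linarith
  then have X7: "X > 0.7 * s" using power_less_imp_less_base[of "0.7 * s" 2 X] X0 by simp
  define T where "T = \<bar>X - s\<bar>"
  have XE: "X^2 - s^2 = E" using X2 Ls by simp
  have "T^2 * (X+s)^2 = (X^2 - s^2)^2" unfolding T_def power2_abs by (simp add: power2_eq_square algebra_simps)
  then have TE: "T^2 * (X+s)^2 = E^2" unfolding XE .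
  have "(1.7 * s)^2 \<le> (X+s)^2" using X7 spos by (intro power_mono) auto
  then have "T^2 * (1.7 * s)^2 \<le> T^2 * (X+s)^2" by (rule mult_left_mono) simp
  then have "T^2 * (1.7 * s)^2 \<le> E^2" using TE by simp
  then have "T^2 * (1.7 * s)^2 * s^2 \<le> E^2 * s^2" by (rule mult_right_mono) simp
  moreover have "T^2 * (1.7 * s)^2 * s^2 = (289/100) * (T * s^2)^2" by (simp add: power2_eq_square algebra_simps)
  ultimately have Z: "(289/100) * (T * s^2)^2 \<le> 5 * C1^2" using EbL by linarith
  have "(sqrt 2 * C1)^2 = 2 * C1^2" by (simp add: power_mult_distrib)
  moreover have "C1^2 > 0" using C1pos by simp
  ultimately have "(T * s^2)^2 < (sqrt 2 * C1)^2" using Z by linarith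
  then have "T * s^2 < sqrt 2 * C1" using power_less_imp_less_base[of "T * s^2" 2 "sqrt 2 * C1"] C1pos by simp
  then have "T < sqrt 2 * C1 / L" using Ls spos by (simp add: field_simps)
  moreover have "X = sqrt(3 * th^2 - P) * sqrt C" unfolding X_def f_def ..
  ultimately show ?thesis using Cpos unfolding T_def C1_def D_def by simp
qed


theorem mainTheorem10:
  fixes p q :: int and \<theta> lam :: real and d n :: nat and a b c :: rat
  assumes irred: "irreducible ([:of_int (-q), of_int (-p), 0, 1:] :: rat poly)"
    and root: "\<theta>^3 - of_int p * \<theta> - of_int q = 0"
    and unique_root: "\<forall>x::real. x^3 - of_int p * x - of_int q = 0 \<longrightarrow> x = \<theta>"
    and d_pos: "d > 0"
    and d_OK: "\<forall>x. in_OK \<theta> x \<longrightarrow>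
                 (\<exists>u v w :: int. x = (of_int u + of_int v * \<theta> + of_int w * \<theta>^2) / real d)"
    and unit: "unit_OK \<theta> lam"
    and lam_gt: "lam > 1"
    and n_pos: "n \<ge> 1"
    and abc: "lam^n = of_rat a + of_rat b * \<theta> + of_rat c * \<theta>^2"
    and big: "lam powr (3 * real n / 2) >
              2 * (1 + sqrt 2) * max (sqrt 2) (sqrt 2 * \<bar>\<theta>\<bar> / sqrt (3 * \<theta>^2 - 4 * of_int p))"
  shows "c > 0 \<and>
         \<bar>lam powr (real n / 2) - sqrt (3 * \<theta>^2 - of_int p) * sqrt (of_rat c)\<bar>
           < sqrt 2 * max (sqrt 2) (sqrt 2 * \<bar>\<theta>\<bar> / sqrt (3 * \<theta>^2 - 4 * of_int p)) / lam^n"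
proof -
  interpret cub p q \<theta> using irred root unique_root by unfold_locales
  have Dp: "3 * \<theta>^2 - 4 * of_int p > 0" by (rule D_pos)
  from unit have okl: "in_OK \<theta> lam" and oki: "in_OK \<theta> (inverse lam)" unfolding unit_OK_def by auto
  obtain a1 b1 c1 where "lam = of_rat a1 + of_rat b1 * \<theta> + of_rat c1 * \<theta>^2"
    using okl unfolding in_OK_def in_field_K_def by blast
  then have lt: "lam = ev (a1,b1,c1)" unfolding ev_def by simp
  obtain a2 b2 c2 where "inverse lam = of_rat a2 + of_rat b2 * \<theta> + of_rat c2 * \<theta>^2"
    using oki unfolding in_OK_def in_field_K_def by blast
  then have it: "inverse lam = ev (a2,b2,c2)" unfolding ev_def by simp
  define t where "t = (a1,b1,c1)"
  define t' where "t' = (a2,b2,c2)"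
  have "ev (tmr t t') = ev (1,0,0)" unfolding ev_tm ev1 t_def t'_def lt[symmetric] it[symmetric]
    using lam_gt by simp
  then have "tmr t t' = (1,0,0)" by (rule ev_inj)
  then have NN: "Nr t * Nr t' = 1" by (metis Nr_tm Nr1)
  have "Nr t \<in> \<int>" by (rule int_norm[OF okl]) (simp add: lt t_def)
  then obtain z where z: "Nr t = of_int z" by (meson Ints_cases)
  have "Nr t' \<in> \<int>" by (rule int_norm[OF oki]) (simp add: it t'_def)
  then obtain z' where z': "Nr t' = of_int z'" by (meson Ints_cases)
  have "z * z' = 1" using NN z z' by (metis of_int_eq_1_iff of_int_mult)
  then have z1: "z = 1 \<or> z = -1" unfolding zmult_eq_1_iff by blast
  have "ev (tp t n) = ev (a,b,c)" unfolding ev_tp t_def lt[symmetric] using abc by (simp add: ev_def)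
  then have "tp t n = (a,b,c)" by (rule ev_inj)
  then have "Nr (a,b,c) = of_int z ^ n" using Nr_tp z by metis
  then have "Nr (a,b,c) = 1 \<or> Nr (a,b,c) = -1"
    using z1 by (cases "even n") (auto simp: neg_one_even_power neg_one_odd_power)
  then have Nabc: "of_rat (Nr (a,b,c)) = (1::real) \<or> of_rat (Nr (a,b,c)) = (-1::real)"
    by auto
  define Qv where "Qv = ((of_rat a - of_rat b * \<theta>/2 + of_rat c * (of_int p - \<theta>^2/2))^2
      + (3 * \<theta>^2 - 4 * of_int p)/4 * (of_rat b - of_rat c * \<theta>)^2)"
  have Qnn: "Qv \<ge> 0" unfolding Qv_def using Dp by (intro add_nonneg_nonneg mult_nonneg_nonneg) auto
  have Lpos: "lam^n > 0" using lam_gt by simp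
  have NR: "lam^n * Qv = of_rat (Nr (a,b,c))" using norm_real[of a b c] abc unfolding Qv_def ev_def by simp
  have "lam^n * Qv \<ge> 0" using Qnn Lpos by simp
  then have Q1: "lam^n * Qv = 1" using NR Nabc by linarith
  define s where "s = lam powr (real n / 2)"
  have spos: "s > 0" unfolding s_def using lam_gt by simp
  have sp: "s^2 = lam powr (real n)"
  proof -
    have "s^2 = lam powr (real n/2) * lam powr (real n / 2)" by (simp add: s_def power2_eq_square)
    also have "\<dots> = lam powr (real n/2 + real n/2)" by (rule powr_add[symmetric])
    finally show ?thesis by simp
  qed
  have s2: "lam^n = s^2" unfolding sp using lam_gt by (simp add: powr_realpow)
  have s3: "lam powr (3 * real n / 2) = s^3"
  proof -
    have "s^3 = s^2 * s" by (simp add: power2_eq_square power3_eq_cube)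
    also have "\<dots> = lam powr (real n) * s" by (simp only: sp)
    also have "\<dots> = lam powr (real n) * lam powr (real n / 2)" by (simp only: s_def)
    also have "\<dots> = lam powr (real n + real n / 2)" by (rule powr_add[symmetric])
    also have "real n + real n / 2 = 3 * real n / 2" by simp
    finally show ?thesis by simp
  qed
  have "of_rat c > (0::real) \<and> \<bar>s - sqrt (3 * \<theta>^2 - of_int p) * sqrt (of_rat c)\<bar>
           < sqrt 2 * max (sqrt 2) (sqrt 2 * \<bar>\<theta>\<bar> / sqrt (3 * \<theta>^2 - 4 * of_int p)) / lam^n"
    apply (rule final_ineq[of \<theta> "of_int p" s "lam^n" "of_rat a" "of_rat b" "of_rat c"])
    using Dp spos s2 Q1 abc big s3 unfolding Qv_def by auto
  then show ?thesis unfolding s_def by simp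
qed


end
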